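(* Let $G=(V,E,H)$ be a HEDG and $\mathbb{P}_V$ a probability distribution on $\mathcal{X}_V=\prod_{v\in V}\mathcal{X}_v$ (standard Borel spaces) that satisfies the intersection property (e.g. because it has a strictly positive density w.r.t. a product measure). If $(G,\mathbb{P}_V)$ satisfies the ancestral undirected pairwise Markov property, then it satisfies the ancestral undirected global Markov property.
   Context: HEDG $G=(V,E,H)$: $V$ finite, $E\subseteq V\times V$ (self-loops allowed), $H$ a simplicial complex on $V$ (contains singletons, closed under subsets); $v\leftrightarrow w$ for distinct $v,w$ with $\{v,w\}\in H$. $A\subseteq V$ is ancestral if it contains every node with a directed path into $A$; induced sub-HEDG $(A,E\cap A^2,\{F\in H:F\subseteq A\})$. Moralization: undirected graph with $v - w$ ($v\neq w$) iff there are $v_1,\dots,v_n$ ($n\ge1$) with $v\in\{v_1\}\cup\mathrm{Pa}(v_1)$, $w\in\{v_n\}\cup\mathrm{Pa}(v_n)$, $v_1\leftrightarrow\cdots\leftrightarrow v_n$; $\partial_U(v)$ denotes neighbours of $v$ in undirected graph $U$. $X\perp_{\mathbb{P}_V}Y\mid Z$ denotes conditional independence of coordinate projections. Intersection property: for pairwise disjoint $X,Y,Z,W\subseteq V$, $X\perp Y\mid W\cup Z$ and $X\perp W\mid Y\cup Z$ imply $X\perp Y\cup W\mid Z$. Ancestral undirected pairwise Markov property: for every ancestral $A$ and $v,w\in A$ with $w\notin\partial_{A^{\mathrm{moral}}}(v)\cup\{v\}$: $\{v\}\perp_{\mathbb{P}_V}\{w\}\mid A\setminus\{v,w\}$. Ancestral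 undirected global Markov property: for every ancestral $A$ and $X,Y,Z\subseteq A$, if every path in $A^{\mathrm{moral}}$ from $X$ to $Y$ contains a node of $Z$, then $X\perp_{\mathbb{P}_V}Y\mid Z$. *)

theory Defs
  imports "HOL-Probability.Probability"
begin

text \<open>A HEDG (V,E,H): V finite, E a set of directed edges on V (self-loops allowed),
  H a simplicial complex on V (contains all singletons, closed under subsets).\<close>
definition hedg :: "'v set \<Rightarrow> ('v \<times> 'v) set \<Rightarrow> 'v set set \<Rightarrow> bool" where
  "hedg V E H \<longleftrightarrow> finite V \<and> E \<subseteq> V \<times> V \<and> (\<forall>F\<in>H. F \<subseteq> V)
     \<and> (\<forall>v\<in>V. {v} \<in> H) \<and> (\<forall>F\<in>H. \<forall>F'. F' \<subseteq> F \<longrightarrow> F' \<in> H)"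

definition parents :: "('v \<times> 'v) set \<Rightarrow> 'v \<Rightarrow> 'v set" where
  "parents E v = {w. (w, v) \<in> E}"

definition bidir :: "'v set set \<Rightarrow> 'v \<Rightarrow> 'v \<Rightarrow> bool" where
  "bidir H v w \<longleftrightarrow> v \<noteq> w \<and> {v, w} \<in> H"

definition ancestral :: "'v set \<Rightarrow> ('v \<times> 'v) set \<Rightarrow> 'v set \<Rightarrow> bool" where
  "ancestral V E A \<longleftrightarrow> A \<subseteq> V \<and> (\<forall>v\<in>A. \<forall>w. (w, v) \<in> E\<^sup>* \<longrightarrow> w \<in> A)"

definition moral_adj :: "'v set \<Rightarrow> ('v \<times> 'v) set \<Rightarrow> 'v set set \<Rightarrow> 'v \<Rightarrow> 'v \<Rightarrow> bool" where
  "moral_adj V E H v w \<longleftrightarrow> v \<noteq> w \<and>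
     (\<exists>vs. vs \<noteq> [] \<and> set vs \<subseteq> V
        \<and> v \<in> {hd vs} \<union> parents E (hd vs)
        \<and> w \<in> {last vs} \<union> parents E (last vs)
        \<and> (\<forall>i. Suc i < length vs \<longrightarrow> bidir H (vs ! i) (vs ! Suc i)))"

definition moral_adj_induced :: "'v set \<Rightarrow> ('v \<times> 'v) set \<Rightarrow> 'v set set \<Rightarrow> 'v set \<Rightarrow> 'v \<Rightarrow> 'v \<Rightarrow> bool" where
  "moral_adj_induced V E H A = moral_adj A (E \<inter> (A \<times> A)) {F \<in> H. F \<subseteq> A}"

definition separates :: "'v set \<Rightarrow> ('v \<Rightarrow> 'v \<Rightarrow> bool) \<Rightarrow> 'v set \<Rightarrow> 'v set \<Rightarrow> 'v set \<Rightarrow> bool" where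
  "separates A U X Y Z \<longleftrightarrow>
     (\<forall>p. p \<noteq> [] \<and> set p \<subseteq> A \<and> hd p \<in> X \<and> last p \<in> Y
          \<and> (\<forall>i. Suc i < length p \<longrightarrow> U (p ! i) (p ! Suc i))
        \<longrightarrow> set p \<inter> Z \<noteq> {})"

definition standard_borel :: "'b measure \<Rightarrow> bool" where
  "standard_borel N \<longleftrightarrow> (\<exists>T. completely_metrizable_space T \<and> separable_space T
     \<and> space N = topspace T \<and> sets N = sigma_sets (topspace T) {U. openin T U})"

definition coord_sigma :: "('v \<Rightarrow> 'b) measure \<Rightarrow> ('v \<Rightarrow> 'b measure) \<Rightarrow> 'v set \<Rightarrow> ('v \<Rightarrow> 'b) measure" where
  "coord_sigma P M S = vimage_algebra (space P) (\<lambda>\<omega>. restrict \<omega> S) (PiM S M)"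

definition cond_indep :: "('v \<Rightarrow> 'b) measure \<Rightarrow> ('v \<Rightarrow> 'b measure) \<Rightarrow> 'v set \<Rightarrow> 'v set \<Rightarrow> 'v set \<Rightarrow> bool" where
  "cond_indep P M X Y Z \<longleftrightarrow>
     (\<forall>a \<in> sets (coord_sigma P M X). \<forall>b \<in> sets (coord_sigma P M Y).
        AE \<omega> in P. real_cond_exp P (coord_sigma P M Z) (indicator (a \<inter> b)) \<omega>
          = real_cond_exp P (coord_sigma P M Z) (indicator a) \<omega>
            * real_cond_exp P (coord_sigma P M Z) (indicator b) \<omega>)"

definition intersection_property :: "'v set \<Rightarrow> ('v \<Rightarrow> 'b) measure \<Rightarrow> ('v \<Rightarrow> 'b measure) \<Rightarrow> bool" where
  "intersection_property V P M \<longleftrightarrow>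
     (\<forall>X Y Z W. X \<subseteq> V \<and> Y \<subseteq> V \<and> Z \<subseteq> V \<and> W \<subseteq> V
        \<and> X \<inter> Y = {} \<and> X \<inter> Z = {} \<and> X \<inter> W = {} \<and> Y \<inter> Z = {} \<and> Y \<inter> W = {} \<and> Z \<inter> W = {}
        \<and> cond_indep P M X Y (W \<union> Z) \<and> cond_indep P M X W (Y \<union> Z)
        \<longrightarrow> cond_indep P M X (Y \<union> W) Z)"

definition ancestral_pairwise_markov ::
  "'v set \<Rightarrow> ('v \<times> 'v) set \<Rightarrow> 'v set set \<Rightarrow> ('v \<Rightarrow> 'b) measure \<Rightarrow> ('v \<Rightarrow> 'b measure) \<Rightarrow> bool" where
  "ancestral_pairwise_markov V E H P M \<longleftrightarrow>
     (\<forall>A. ancestral V E A \<longrightarrow>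
        (\<forall>v\<in>A. \<forall>w\<in>A. w \<noteq> v \<and> \<not> moral_adj_induced V E H A v w
           \<longrightarrow> cond_indep P M {v} {w} (A - {v, w})))"

definition ancestral_global_markov ::
  "'v set \<Rightarrow> ('v \<times> 'v) set \<Rightarrow> 'v set set \<Rightarrow> ('v \<Rightarrow> 'b) measure \<Rightarrow> ('v \<Rightarrow> 'b measure) \<Rightarrow> bool" where
  "ancestral_global_markov V E H P M \<longleftrightarrow>
     (\<forall>A. ancestral V E A \<longrightarrow>
        (\<forall>X Y Z. X \<subseteq> A \<and> Y \<subseteq> A \<and> Z \<subseteq> A
           \<and> separates A (moral_adj_induced V E H A) X Y Z
           \<longrightarrow> cond_indep P M X Y Z))"

end

theory Submission
  imports Defs
begin


lemma gen_eq: "(\<And>i A. Q i A \<Longrightarrow> g (h i A) = k i A) \<Longrightarrow> {g B | B. B \<in> {h i A | i A. Q i A}} = {k i A | i A. Q i A}"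
  by auto metis

lemma coord_sets:
  assumes sp: "space P = space (PiM V M)" and S: "S \<subseteq> V"
  shows "sets (coord_sigma P M S) = sigma_sets (space P) {{\<omega> \<in> space P. \<omega> i \<in> A} | i A. i \<in> S \<and> A \<in> sets (M i)}"
proof -
  have f: "(\<lambda>\<omega>. restrict \<omega> S) \<in> space P \<rightarrow> (\<Pi>\<^sub>E i\<in>S. space (M i))"
    using S by (auto simp: sp space_PiM)
  have "sets (coord_sigma P M S) = {(\<lambda>\<omega>. restrict \<omega> S) -` A \<inter> space P | A. A \<in> sets (PiM S M)}"
    unfolding coord_sigma_def by (rule sets_vimage_algebra2) (use f in \<open>simp add: space_PiM\<close>)
  also have "\<dots> = sigma_sets (space P) {(\<lambda>\<omega>. restrict \<omega> S) -` A \<inter> space P | A. A \<in> {{f\<in>\<Pi>\<^sub>E i\<in>S. space (M i). f i \<in> A} | i A. i \<in> S \<and> A \<in> sets (M i)}}"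
    unfolding sets_PiM_single by (rule sigma_sets_vimage_commute[OF f])
  also have "{(\<lambda>\<omega>. restrict \<omega> S) -` A \<inter> space P | A. A \<in> {{f\<in>\<Pi>\<^sub>E i\<in>S. space (M i). f i \<in> A} | i A. i \<in> S \<and> A \<in> sets (M i)}}
     = {{\<omega> \<in> space P. \<omega> i \<in> A} | i A. i \<in> S \<and> A \<in> sets (M i)}"
  proof -
    have "(\<lambda>\<omega>. restrict \<omega> S) -` {f\<in>\<Pi>\<^sub>E i\<in>S. space (M i). f i \<in> A} \<inter> space P = {\<omega> \<in> space P. \<omega> i \<in> A}"
      if "i \<in> S" for i A
    proof (intro set_eqI iffI)
      fix \<omega> assume "\<omega> \<in> (\<lambda>\<omega>. restrict \<omega> S) -` {f\<in>\<Pi>\<^sub>E i\<in>S. space (M i). f i \<in> A} \<inter> space P"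
      then show "\<omega> \<in> {\<omega> \<in> space P. \<omega> i \<in> A}" using that by simp
    next
      fix \<omega> assume w: "\<omega> \<in> {\<omega> \<in> space P. \<omega> i \<in> A}"
      then have "restrict \<omega> S \<in> (\<Pi>\<^sub>E i\<in>S. space (M i))" using f by blast
      then show "\<omega> \<in> (\<lambda>\<omega>. restrict \<omega> S) -` {f\<in>\<Pi>\<^sub>E i\<in>S. space (M i). f i \<in> A} \<inter> space P"
        using w that by simp
    qed
    then show ?thesis by (intro gen_eq) blast
  qed
  finally show ?thesis .
qed

lemma coord_sub:
  assumes sp: "sets P = sets (PiM V M)" and S: "S \<subseteq> V"
  shows "subalgebra P (coord_sigma P M S)"
proof -
  have sp': "space P = space (PiM V M)" using sets_eq_imp_space_eq[OF sp] .
  have "{{\<omega> \<in> space P. \<omega> i \<in> A} | i A. i \<in> S \<and> A \<in> sets (M i)} \<subseteq> sets P"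
  proof safe
    fix i A assume "i \<in> S" "A \<in> sets (M i)"
    then have "(\<lambda>\<omega>. \<omega> i) -` A \<inter> space (PiM V M) \<in> sets (PiM V M)"
      using S by (intro measurable_sets[OF measurable_component_singleton]) auto
    moreover have "(\<lambda>\<omega>. \<omega> i) -` A \<inter> space (PiM V M) = {\<omega> \<in> space P. \<omega> i \<in> A}" using sp' by auto
    ultimately show "{\<omega> \<in> space P. \<omega> i \<in> A} \<in> sets P" using sp by simp
  qed
  then have "sets (coord_sigma P M S) \<subseteq> sets P"
    unfolding coord_sets[OF sp' S] by (intro sets.sigma_sets_subset') auto
  then show ?thesis unfolding subalgebra_def coord_sigma_def by simp
qed

lemma coord_mono:
  assumes sp: "sets P = sets (PiM V M)" and ST: "S \<subseteq> T" "T \<subseteq> V"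
  shows "sets (coord_sigma P M S) \<subseteq> sets (coord_sigma P M T)"
proof -
  have sp': "space P = space (PiM V M)" using sets_eq_imp_space_eq[OF sp] .
  show ?thesis unfolding coord_sets[OF sp' ST(2)] coord_sets[OF sp' order_trans[OF ST]]
    by (rule sigma_sets_mono') (use ST in blast)
qed



definition ceq :: "'a measure \<Rightarrow> 'a measure \<Rightarrow> 'a set \<Rightarrow> 'a set \<Rightarrow> bool" where
  "ceq P F a b \<longleftrightarrow> (AE \<omega> in P. real_cond_exp P F (indicator (a \<inter> b)) \<omega>
     = real_cond_exp P F (indicator a) \<omega> * real_cond_exp P F (indicator b) \<omega>)"

context finite_measure_subalgebra
begin

lemma F_sub: "c \<in> sets F \<Longrightarrow> c \<in> sets M"
  using subalg unfolding subalgebra_def by auto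

lemma spF: "space M \<in> sets F"
  using subalg sets.top[of F] unfolding subalgebra_def by simp

lemma ind_int: "a \<in> sets M \<Longrightarrow> integrable M (indicator a :: _ \<Rightarrow> real)"
  by (intro integrable_real_indicator) (auto simp: less_top[symmetric])

lemma ind_int2: "a \<in> sets M \<Longrightarrow> b \<in> sets M \<Longrightarrow> integrable M (\<lambda>x. indicator a x * indicator b x :: real)"
proof -
  assume "a \<in> sets M" "b \<in> sets M"
  then have "integrable M (indicator (a \<inter> b) :: _ \<Rightarrow> real)" by (intro ind_int) auto
  moreover have "indicator (a \<inter> b) = (\<lambda>x. indicator a x * indicator b x :: real)"
    by (auto simp: indicator_inter_arith)
  ultimately show ?thesis by simp
qed

lemma ce_bounds:
  assumes a: "a \<in> sets M"
  shows "AE x in M. 0 \<le> real_cond_exp M F (indicator a) x \<and> real_cond_exp M F (indicator a) x \<le> 1"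
proof -
  have "AE x in M. 0 \<le> real_cond_exp M F (indicator a) x"
    by (rule real_cond_exp_pos) (use a in auto)
  moreover have "AE x in M. real_cond_exp M F (indicator a) x \<le> 1"
    by (rule real_cond_exp_le_c) (use a ind_int in auto)
  ultimately show ?thesis by auto
qed

lemma bint:
  fixes f :: "_ \<Rightarrow> real"
  assumes "f \<in> borel_measurable M" "AE x in M. \<bar>f x\<bar> \<le> C"
  shows "integrable M f"
  by (rule integrable_const_bound[where B=C]) (use assms in auto)

lemma pull_out:
  assumes a: "a \<in> sets F" and b: "b \<in> sets M"
  shows "ceq M F a b"
proof -
  have aM: "a \<in> sets M" using F_sub a by auto
  have i: "indicator (a \<inter> b) = (\<lambda>x. indicator a x * indicator b x :: real)"
    by (auto simp: indicator_inter_arith)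
  have "AE x in M. real_cond_exp M F (\<lambda>x. indicator a x * indicator b x) x = indicator a x * real_cond_exp M F (indicator b) x"
    by (rule real_cond_exp_mult) (use a b aM in \<open>auto intro: ind_int2\<close>)
  moreover have "AE x in M. real_cond_exp M F (indicator a) x = indicator a x"
    by (rule real_cond_exp_F_meas) (use a aM ind_int in auto)
  ultimately show ?thesis unfolding ceq_def i by auto
qed

lemma rect:
  assumes a1: "a1 \<in> sets M" and c: "c \<in> sets F" and b: "b \<in> sets M" and h: "ceq M F a1 b"
  shows "ceq M F (a1 \<inter> c) b"
proof -
  have cM: "c \<in> sets M" using F_sub c by auto
  have i1: "indicator (a1 \<inter> c \<inter> b) = (\<lambda>x. indicator c x * indicator (a1 \<inter> b) x :: real)"
    by (auto simp: indicator_inter_arith[symmetric] intro!: arg_cong[where f=indicator])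
  have i2: "indicator (a1 \<inter> c) = (\<lambda>x. indicator c x * indicator a1 x :: real)"
    by (auto simp: indicator_inter_arith[symmetric] intro!: arg_cong[where f=indicator])
  have "AE x in M. real_cond_exp M F (\<lambda>x. indicator c x * indicator (a1 \<inter> b) x) x = indicator c x * real_cond_exp M F (indicator (a1 \<inter> b)) x"
    by (rule real_cond_exp_mult) (use a1 b c cM in \<open>auto intro: ind_int2\<close>)
  moreover have "AE x in M. real_cond_exp M F (\<lambda>x. indicator c x * indicator a1 x) x = indicator c x * real_cond_exp M F (indicator a1) x"
    by (rule real_cond_exp_mult) (use a1 b c cM in \<open>auto intro: ind_int2\<close>)
  ultimately show ?thesis using h unfolding ceq_def i1 i2 by auto
qed

lemma Kid:
  assumes a: "a \<in> sets M" and b: "b \<in> sets M" and c: "c \<in> sets F"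
  shows "(\<integral>x. (indicator c x * real_cond_exp M F (indicator b) x) * real_cond_exp M F (indicator a) x \<partial>M)
       = (\<integral>x. (indicator c x * real_cond_exp M F (indicator b) x) * indicator a x \<partial>M)"
proof (rule real_cond_exp_intg(2))
  have cM: "c \<in> sets M" using F_sub c by auto
  show "integrable M (\<lambda>x. (indicator c x * real_cond_exp M F (indicator b) x) * indicator a x)"
  proof (rule bint[where C=1])
    show "(\<lambda>x. (indicator c x * real_cond_exp M F (indicator b) x) * indicator a x) \<in> borel_measurable M"
      using a cM by measurable
    show "AE x in M. \<bar>(indicator c x * real_cond_exp M F (indicator b) x) * indicator a x\<bar> \<le> 1"
      using ce_bounds[OF b] by eventually_elim (auto simp: indicator_def)
  qed
  show "(\<lambda>x. indicator c x * real_cond_exp M F (indicator b) x) \<in> borel_measurable F"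
    using c by measurable
  show "indicator a \<in> borel_measurable M" using a by measurable
qed

lemma char:
  assumes a: "a \<in> sets M" and b: "b \<in> sets M"
  shows "ceq M F a b \<longleftrightarrow> (\<forall>c\<in>sets F. measure M (a \<inter> b \<inter> c) = (\<integral>x. indicator a x * (indicator c x * real_cond_exp M F (indicator b) x) \<partial>M))"
proof -
  let ?e = "real_cond_exp M F (indicator b)"
  let ?ea = "real_cond_exp M F (indicator a)"
  have ab: "a \<inter> b \<in> sets M" using a b by auto
  have meas: "measure M (a \<inter> b \<inter> c) = (\<integral>x\<in>c. indicator (a \<inter> b) x \<partial>M)" if c: "c \<in> sets F" for c
  proof -
    have "c \<in> sets M" using F_sub c by auto
    then have eq: "indicator (a \<inter> b \<inter> c) = (\<lambda>x. indicator c x *\<^sub>R indicator (a \<inter> b) x :: real)"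
      by (auto simp: indicator_def)
    have abc: "a \<inter> b \<inter> c \<in> sets M" using a b \<open>c \<in> sets M\<close> by auto
    have "integral\<^sup>L M (indicator (a \<inter> b \<inter> c)) = measure M (a \<inter> b \<inter> c \<inter> space M)"
      by simp
    also have "a \<inter> b \<inter> c \<inter> space M = a \<inter> b \<inter> c" by (rule sets.Int_space_eq2[OF abc])
    finally show ?thesis unfolding set_lebesgue_integral_def eq by (rule sym)
  qed
  have K: "(\<integral>x\<in>c. ?ea x * ?e x \<partial>M) = (\<integral>x. indicator a x * (indicator c x * ?e x) \<partial>M)" if c: "c \<in> sets F" for c
  proof -
    have "(\<integral>x\<in>c. ?ea x * ?e x \<partial>M) = (\<integral>x. (indicator c x * ?e x) * ?ea x \<partial>M)"
      unfolding set_lebesgue_integral_def by (simp add: ac_simps)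
    also have "\<dots> = (\<integral>x. (indicator c x * ?e x) * indicator a x \<partial>M)" by (rule Kid[OF a b c])
    also have "\<dots> = (\<integral>x. indicator a x * (indicator c x * ?e x) \<partial>M)" by (simp add: ac_simps)
    finally show ?thesis .
  qed
  show ?thesis
  proof
    assume h: "ceq M F a b"
    show "\<forall>c\<in>sets F. measure M (a \<inter> b \<inter> c) = (\<integral>x. indicator a x * (indicator c x * ?e x) \<partial>M)"
    proof
      fix c assume c: "c \<in> sets F"
      have "measure M (a \<inter> b \<inter> c) = (\<integral>x\<in>c. indicator (a \<inter> b) x \<partial>M)" by (rule meas[OF c])
      also have "\<dots> = (\<integral>x\<in>c. real_cond_exp M F (indicator (a \<inter> b)) x \<partial>M)"
        by (rule real_cond_exp_intA) (use ab c ind_int in auto)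
      also have "\<dots> = (\<integral>x\<in>c. ?ea x * ?e x \<partial>M)"
      proof -
        have cM: "c \<in> sets M" using F_sub c by auto
        show ?thesis unfolding set_lebesgue_integral_def
        proof (rule integral_cong_AE)
          show "AE x in M. indicator c x *\<^sub>R real_cond_exp M F (indicator (a \<inter> b)) x = indicator c x *\<^sub>R (?ea x * ?e x)"
            using h unfolding ceq_def by eventually_elim simp
        next
          show "(\<lambda>x. indicator c x *\<^sub>R real_cond_exp M F (indicator (a \<inter> b)) x) \<in> borel_measurable M"
            using cM by measurable
          show "(\<lambda>x. indicator c x *\<^sub>R (?ea x * ?e x)) \<in> borel_measurable M"
            using cM by measurable
        qed
      qed
      also have "\<dots> = (\<integral>x. indicator a x * (indicator c x * ?e x) \<partial>M)" by (rule K[OF c])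
      finally show "measure M (a \<inter> b \<inter> c) = (\<integral>x. indicator a x * (indicator c x * ?e x) \<partial>M)" .
    qed
  next
    assume h: "\<forall>c\<in>sets F. measure M (a \<inter> b \<inter> c) = (\<integral>x. indicator a x * (indicator c x * ?e x) \<partial>M)"
    have "AE x in M. real_cond_exp M F (indicator (a \<inter> b)) x = ?ea x * ?e x"
    proof (rule real_cond_exp_charact)
      fix c assume c: "c \<in> sets F"
      show "(\<integral>x\<in>c. indicator (a \<inter> b) x \<partial>M) = (\<integral>x\<in>c. ?ea x * ?e x \<partial>M)"
      proof -
        have "(\<integral>x\<in>c. indicator (a \<inter> b) x \<partial>M) = measure M (a \<inter> b \<inter> c)" using meas[OF c] by (rule sym)
        also have "\<dots> = (\<integral>x. indicator a x * (indicator c x * ?e x) \<partial>M)" using h c by (rule bspec)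
        also have "\<dots> = (\<integral>x\<in>c. ?ea x * ?e x \<partial>M)" using K[OF c] by (rule sym)
        finally show ?thesis .
      qed
    next
      show "integrable M (indicator (a \<inter> b) :: _ \<Rightarrow> real)" using ab ind_int by auto
      show "integrable M (\<lambda>x. ?ea x * ?e x)"
      proof (rule bint[where C=1])
        show "(\<lambda>x. ?ea x * ?e x) \<in> borel_measurable M" by measurable
        show "AE x in M. \<bar>?ea x * ?e x\<bar> \<le> 1"
          using ce_bounds[OF a] ce_bounds[OF b] by eventually_elim (auto simp: abs_mult intro: mult_le_one)
      qed
      show "(\<lambda>x. ?ea x * ?e x) \<in> borel_measurable F" by measurable
    qed
    then show "ceq M F a b" unfolding ceq_def .
  qed
qed

lemma extend:
  assumes G: "G \<subseteq> sets M" "Int_stable G" and hG: "\<forall>a\<in>G. ceq M F a b"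
    and b: "b \<in> sets M" and a: "a \<in> sigma_sets (space M) G"
  shows "ceq M F a b"
proof -
  let ?e = "real_cond_exp M F (indicator b)"
  have sig: "sigma_sets (space M) G \<subseteq> sets M"
    using G by (intro sets.sigma_sets_subset') auto
  have aM: "a \<in> sets M" using sig a by auto
  show ?thesis unfolding char[OF aM b]
  proof
    fix c assume c: "c \<in> sets F"
    have cM: "c \<in> sets M" using F_sub c by auto
    define h where "h = (\<lambda>x. indicator c x * ?e x)"
    have hm[measurable]: "h \<in> borel_measurable M" unfolding h_def using cM by measurable
    have hb: "AE x in M. 0 \<le> h x \<and> h x \<le> 1"
      using ce_bounds[OF b] unfolding h_def by eventually_elim (auto simp: indicator_def)
    define N where "N = density M (\<lambda>x. ennreal (h x))"
    have sN: "sets N = sets M" "space N = space M" unfolding N_def by auto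
    have link: "emeasure N a' = ennreal (\<integral>x. indicator a' x * h x \<partial>M)" if a': "a' \<in> sets M" for a'
    proof -
      have "emeasure N a' = (\<integral>\<^sup>+ x. ennreal (h x) * indicator a' x \<partial>M)"
        unfolding N_def using a' by (intro emeasure_density) auto
      also have "\<dots> = (\<integral>\<^sup>+ x. ennreal (indicator a' x * h x) \<partial>M)"
        by (intro nn_integral_cong) (auto simp: indicator_def)
      also have "\<dots> = ennreal (\<integral>x. indicator a' x * h x \<partial>M)"
      proof (rule nn_integral_eq_integral)
        show "integrable M (\<lambda>x. indicator a' x * h x)"
        proof (rule bint[where C=1])
          show "(\<lambda>x. indicator a' x * h x) \<in> borel_measurable M" using a' by measurable
          show "AE x in M. \<bar>indicator a' x * h x\<bar> \<le> 1"
            using hb by eventually_elim (auto simp: indicator_def)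
        qed
        show "AE x in M. 0 \<le> indicator a' x * h x"
          using hb by eventually_elim auto
      qed
      finally show ?thesis .
    qed
    have nonneg: "0 \<le> (\<integral>x. indicator a' x * h x \<partial>M)" for a'
      by (rule integral_nonneg_AE) (use hb in \<open>auto elim!: eventually_mono\<close>)
    have realQ: "emeasure M (a' \<inter> (b \<inter> c)) = emeasure N a' \<longleftrightarrow> measure M (a' \<inter> b \<inter> c) = (\<integral>x. indicator a' x * h x \<partial>M)"
      if a': "a' \<in> sets M" for a'
      using link[OF a'] nonneg[of a'] by (simp add: emeasure_eq_measure Int_assoc)
    have finN: "emeasure N a' \<noteq> \<infinity>" if a': "a' \<in> sets M" for a'
      using link[OF a'] by simp
    have Gpow: "G \<subseteq> Pow (space M)" using G(1) sets.sets_into_space by auto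
    from G(2) Gpow a have "emeasure M (a \<inter> (b \<inter> c)) = emeasure N a"
    proof (induction rule: sigma_sets_induct_disjoint)
      case (basic A)
      have AM: "A \<in> sets M" using basic G by auto
      have "ceq M F A b" using hG basic by auto
      then have "measure M (A \<inter> b \<inter> c) = (\<integral>x. indicator A x * h x \<partial>M)"
        unfolding char[OF AM b] h_def using c by auto
      then show ?case using realQ[OF AM] by simp
    next
      case empty
      then show ?case unfolding N_def by simp
    next
      case (compl A)
      have AM: "A \<in> sets M" using compl sig by auto
      have bcM: "b \<inter> c \<in> sets M" using b cM by auto
      have Q\<Omega>: "emeasure M (space M \<inter> (b \<inter> c)) = emeasure N (space M)"
      proof -
        have "ceq M F (space M) b" by (rule pull_out) (use b spF in auto)
        then have "measure M (space M \<inter> b \<inter> c) = (\<integral>x. indicator (space M) x * h x \<partial>M)"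
          unfolding char[OF sets.top b] h_def using c by auto
        then show ?thesis using realQ[OF sets.top] by simp
      qed
      have "emeasure M ((space M - A) \<inter> (b \<inter> c)) = emeasure M ((space M \<inter> (b \<inter> c)) - (A \<inter> (b \<inter> c)))"
        by (intro arg_cong[where f="emeasure M"]) auto
      also have "\<dots> = emeasure M (space M \<inter> (b \<inter> c)) - emeasure M (A \<inter> (b \<inter> c))"
        by (rule emeasure_Diff) (use AM bcM in \<open>auto simp: emeasure_eq_measure\<close>)
      also have "\<dots> = emeasure N (space M) - emeasure N A" using Q\<Omega> compl.IH by simp
      also have "\<dots> = emeasure N (space M - A)"
        using emeasure_compl[of A N] AM finN[OF AM] sN by simp
      finally show ?case .
    next
      case (union A)
      have AM: "range A \<subseteq> sets M" using union sig by auto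
      have "emeasure M ((\<Union>i. A i) \<inter> (b \<inter> c)) = emeasure M (\<Union>i. A i \<inter> (b \<inter> c))"
        by (intro arg_cong[where f="emeasure M"]) auto
      also have "\<dots> = (\<Sum>i. emeasure M (A i \<inter> (b \<inter> c)))"
        by (rule suminf_emeasure[symmetric]) (use AM b cM union(1) in \<open>auto simp: disjoint_family_on_def\<close>)
      also have "\<dots> = (\<Sum>i. emeasure N (A i))" using union.IH by simp
      also have "\<dots> = emeasure N (\<Union>i. A i)"
        by (rule suminf_emeasure) (use AM union(1) sN in auto)
      finally show ?case .
    qed
    then show "measure M (a \<inter> b \<inter> c) = (\<integral>x. indicator a x * (indicator c x * ?e x) \<partial>M)"
      using realQ[OF aM] unfolding h_def by simp
  qed
qed

end


lemma fms:
  assumes "prob_space P" "sets P = sets (PiM V M)" "Z \<subseteq> V"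
  shows "finite_measure_subalgebra P (coord_sigma P M Z)"
  using assms coord_sub[OF assms(2,3)]
  by (intro finite_measure_subalgebra.intro finite_measure_subalgebra_axioms.intro) (auto simp: prob_space_def)

lemma ci_ceq: "cond_indep P M X Y Z \<longleftrightarrow> (\<forall>a\<in>sets (coord_sigma P M X). \<forall>b\<in>sets (coord_sigma P M Y). ceq P (coord_sigma P M Z) a b)"
  unfolding cond_indep_def ceq_def ..

lemma ci_sym: "cond_indep P M X Y Z \<Longrightarrow> cond_indep P M Y X Z"
  unfolding cond_indep_def
proof (intro ballI)
  fix a b assume h: "\<forall>a\<in>sets (coord_sigma P M X). \<forall>b\<in>sets (coord_sigma P M Y).
           AE \<omega> in P. real_cond_exp P (coord_sigma P M Z) (indicator (a \<inter> b)) \<omega> =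
                      real_cond_exp P (coord_sigma P M Z) (indicator a) \<omega> * real_cond_exp P (coord_sigma P M Z) (indicator b) \<omega>"
    and a: "a \<in> sets (coord_sigma P M Y)" and b: "b \<in> sets (coord_sigma P M X)"
  from h b a have "AE \<omega> in P. real_cond_exp P (coord_sigma P M Z) (indicator (b \<inter> a)) \<omega> =
                      real_cond_exp P (coord_sigma P M Z) (indicator b) \<omega> * real_cond_exp P (coord_sigma P M Z) (indicator a) \<omega>" by blast
  then show "AE \<omega> in P. real_cond_exp P (coord_sigma P M Z) (indicator (a \<inter> b)) \<omega> =
                      real_cond_exp P (coord_sigma P M Z) (indicator a) \<omega> * real_cond_exp P (coord_sigma P M Z) (indicator b) \<omega>"
    by (simp only: Int_commute[of b a] mult.commute[of "real_cond_exp P (coord_sigma P M Z) (indicator b) _"])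
qed

lemma ci_monoY:
  assumes "cond_indep P M X T Z" "Y \<subseteq> T" "T \<subseteq> V" "sets P = sets (PiM V M)"
  shows "cond_indep P M X Y Z"
  using assms coord_mono[OF assms(4,2,3)] unfolding cond_indep_def by blast

lemma ci_sub:
  assumes P: "prob_space P" "sets P = sets (PiM V M)" and XZ: "X \<subseteq> Z" "Z \<subseteq> V" and Y: "Y \<subseteq> V"
  shows "cond_indep P M X Y Z"
proof -
  interpret finite_measure_subalgebra P "coord_sigma P M Z" by (rule fms[OF P XZ(2)])
  show ?thesis unfolding ci_ceq
  proof (intro ballI)
    fix a b assume a: "a \<in> sets (coord_sigma P M X)" and b: "b \<in> sets (coord_sigma P M Y)"
    have "a \<in> sets (coord_sigma P M Z)" using coord_mono[OF P(2) XZ] a by auto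
    moreover have "b \<in> sets P" using coord_sub[OF P(2) Y] b unfolding subalgebra_def by auto
    ultimately show "ceq P (coord_sigma P M Z) a b" by (rule pull_out)
  qed
qed

lemma ci_ext:
  assumes P: "prob_space P" "sets P = sets (PiM V M)" and X: "X \<subseteq> V" and Z: "Z0 \<subseteq> Z" "Z \<subseteq> V"
    and Y: "Y \<subseteq> V" and h: "cond_indep P M X Y Z"
  shows "cond_indep P M (X \<union> Z0) Y Z"
proof -
  interpret finite_measure_subalgebra P "coord_sigma P M Z" by (rule fms[OF P Z(2)])
  have sp': "space P = space (PiM V M)" using sets_eq_imp_space_eq[OF P(2)] .
  have Z0V: "Z0 \<subseteq> V" using Z by auto
  define G where "G = {a1 \<inter> c | a1 c. a1 \<in> sets (coord_sigma P M X) \<and> c \<in> sets (coord_sigma P M Z0)}"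
  have XP: "sets (coord_sigma P M X) \<subseteq> sets P" using coord_sub[OF P(2) X] unfolding subalgebra_def by auto
  have Z0P: "sets (coord_sigma P M Z0) \<subseteq> sets P" using coord_sub[OF P(2) Z0V] unfolding subalgebra_def by auto
  have Z0Z: "sets (coord_sigma P M Z0) \<subseteq> sets (coord_sigma P M Z)" by (rule coord_mono[OF P(2) Z])
  have GP: "G \<subseteq> sets P" unfolding G_def using XP Z0P by auto
  have Gst: "Int_stable G"
    unfolding Int_stable_def G_def
  proof safe
    fix a1 c a1' c'
    assume "a1 \<in> sets (coord_sigma P M X)" "c \<in> sets (coord_sigma P M Z0)"
      "a1' \<in> sets (coord_sigma P M X)" "c' \<in> sets (coord_sigma P M Z0)"
    then show "\<exists>a1'' c''. a1 \<inter> c \<inter> (a1' \<inter> c') = a1'' \<inter> c'' \<and> a1'' \<in> sets (coord_sigma P M X) \<and> c'' \<in> sets (coord_sigma P M Z0)"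
      by (intro exI[of _ "a1 \<inter> a1'"] exI[of _ "c \<inter> c'"]) auto
  qed
  have sX: "space P \<in> sets (coord_sigma P M X)" "space P \<in> sets (coord_sigma P M Z0)"
    using sets.top[of "coord_sigma P M X"] sets.top[of "coord_sigma P M Z0"] unfolding coord_sigma_def by auto
  have gens: "{{\<omega> \<in> space P. \<omega> i \<in> A} | i A. i \<in> X \<union> Z0 \<and> A \<in> sets (M i)} \<subseteq> G"
  proof
    fix s assume "s \<in> {{\<omega> \<in> space P. \<omega> i \<in> A} | i A. i \<in> X \<union> Z0 \<and> A \<in> sets (M i)}"
    then obtain i A where s: "s = {\<omega> \<in> space P. \<omega> i \<in> A}" and iA: "i \<in> X \<union> Z0" "A \<in> sets (M i)" by blast
    have "{\<omega> \<in> space P. \<omega> i \<in> A} \<in> G"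
    proof (cases "i \<in> X")
      case True
      have "{\<omega> \<in> space P. \<omega> i \<in> A} \<in> sets (coord_sigma P M X)"
        unfolding coord_sets[OF sp' X] using True iA by (intro sigma_sets.Basic) blast
      then show ?thesis unfolding G_def using sX by (intro CollectI exI[of _ "{\<omega> \<in> space P. \<omega> i \<in> A}"] exI[of _ "space P"]) auto
    next
      case False
      then have "i \<in> Z0" using iA by auto
      then have "{\<omega> \<in> space P. \<omega> i \<in> A} \<in> sets (coord_sigma P M Z0)"
        unfolding coord_sets[OF sp' Z0V] using iA by (intro sigma_sets.Basic) blast
      then show ?thesis unfolding G_def using sX by (intro CollectI exI[of _ "space P"] exI[of _ "{\<omega> \<in> space P. \<omega> i \<in> A}"]) auto
    qed
    then show "s \<in> G" using s by simp
  qed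
  have XZ0V: "X \<union> Z0 \<subseteq> V" using X Z0V by auto
  have sub: "sets (coord_sigma P M (X \<union> Z0)) \<subseteq> sigma_sets (space P) G"
    unfolding coord_sets[OF sp' XZ0V] by (rule sigma_sets_mono'[OF gens])
  show ?thesis unfolding ci_ceq
  proof (intro ballI)
    fix a b assume a: "a \<in> sets (coord_sigma P M (X \<union> Z0))" and b: "b \<in> sets (coord_sigma P M Y)"
    have bP: "b \<in> sets P" using coord_sub[OF P(2) Y] b unfolding subalgebra_def by auto
    show "ceq P (coord_sigma P M Z) a b"
    proof (rule extend[OF GP Gst _ bP])
      show "a \<in> sigma_sets (space P) G" using sub a by auto
      show "\<forall>a\<in>G. ceq P (coord_sigma P M Z) a b"
      proof
        fix a' assume "a' \<in> G"
        then obtain a1 c where a': "a' = a1 \<inter> c" "a1 \<in> sets (coord_sigma P M X)" "c \<in> sets (coord_sigma P M Z0)"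
          unfolding G_def by blast
        have "ceq P (coord_sigma P M Z) a1 b" using h a'(2) b unfolding ci_ceq by blast
        then show "ceq P (coord_sigma P M Z) a' b" unfolding a'(1)
          by (rule rect[OF _ _ bP, rotated 2]) (use a' XP Z0Z in auto)
      qed
    qed
  qed
qed



definition Rel :: "'v set \<Rightarrow> ('v \<Rightarrow> 'v \<Rightarrow> bool) \<Rightarrow> 'v set \<Rightarrow> ('v \<times> 'v) set" where
  "Rel A U T = {(u, v). u \<in> A - T \<and> v \<in> A - T \<and> U u v}"

lemma Rel_mono: "T \<subseteq> T' \<Longrightarrow> Rel A U T' \<subseteq> Rel A U T"
  unfolding Rel_def by auto

lemma Rel_end: "(u, v) \<in> (Rel A U T)\<^sup>* \<Longrightarrow> u \<in> A - T \<Longrightarrow> v \<in> A - T"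
  by (induction rule: rtrancl_induct) (auto simp: Rel_def)

lemma Rel_sym:
  assumes Us: "\<And>u v. U u v \<Longrightarrow> U v u" and h: "(u, v) \<in> (Rel A U T)\<^sup>*"
  shows "(v, u) \<in> (Rel A U T)\<^sup>*"
  using h
proof (induction rule: rtrancl_induct)
  case base then show ?case by simp
next
  case (step w v)
  have "(v, w) \<in> Rel A U T" using step(2) Us unfolding Rel_def by auto
  then show ?case using step(3) by (rule converse_rtrancl_into_rtrancl)
qed

lemma sep_iff:
  "separates A U X Y Z \<longleftrightarrow> (\<forall>x\<in>X. \<forall>y\<in>Y. x \<in> A - Z \<longrightarrow> (x, y) \<notin> (Rel A U Z)\<^sup>*)"
proof
  assume s: "separates A U X Y Z"
  show "\<forall>x\<in>X. \<forall>y\<in>Y. x \<in> A - Z \<longrightarrow> (x, y) \<notin> (Rel A U Z)\<^sup>*"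
  proof (intro ballI impI notI)
    fix x y assume x: "x \<in> X" and y: "y \<in> Y" and xA: "x \<in> A - Z" and r: "(x, y) \<in> (Rel A U Z)\<^sup>*"
    obtain n where "(x, y) \<in> (Rel A U Z) ^^ n" using r rtrancl_imp_relpow by blast
    then obtain f where f: "f 0 = x" "f n = y" "\<And>i. i < n \<Longrightarrow> (f i, f (Suc i)) \<in> Rel A U Z"
      unfolding relpow_fun_conv by blast
    define p where "p = map f [0..<Suc n]"
    have fin: "f i \<in> A - Z" if "i \<le> n" for i
    proof (cases i)
      case 0 then show ?thesis using f xA by simp
    next
      case (Suc j) then show ?thesis using f(3)[of j] that unfolding Rel_def by auto
    qed
    have "p \<noteq> []" unfolding p_def by simp
    moreover have "set p \<subseteq> A" using fin unfolding p_def by auto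
    moreover have "hd p \<in> X" unfolding p_def using f x by (simp add: hd_map del: upt_Suc)
    moreover have "last p \<in> Y" unfolding p_def using f y by (simp add: last_map del: upt_Suc)
    moreover have "\<forall>i. Suc i < length p \<longrightarrow> U (p ! i) (p ! Suc i)"
    proof (intro allI impI)
      fix i assume "Suc i < length p"
      then have "i < n" unfolding p_def by simp
      then have "(f i, f (Suc i)) \<in> Rel A U Z" by (rule f(3))
      moreover have "p ! i = f i" "p ! Suc i = f (Suc i)" using \<open>i < n\<close> unfolding p_def
        by (simp_all add: nth_map del: upt_Suc)
      ultimately show "U (p ! i) (p ! Suc i)" unfolding Rel_def by simp
    qed
    ultimately have "set p \<inter> Z \<noteq> {}" using s unfolding separates_def by blast
    moreover have "set p \<inter> Z = {}" using fin unfolding p_def by auto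
    ultimately show False by simp
  qed
next
  assume h: "\<forall>x\<in>X. \<forall>y\<in>Y. x \<in> A - Z \<longrightarrow> (x, y) \<notin> (Rel A U Z)\<^sup>*"
  show "separates A U X Y Z" unfolding separates_def
  proof (intro allI impI)
    fix p assume p: "p \<noteq> [] \<and> set p \<subseteq> A \<and> hd p \<in> X \<and> last p \<in> Y \<and> (\<forall>i. Suc i < length p \<longrightarrow> U (p ! i) (p ! Suc i))"
    show "set p \<inter> Z \<noteq> {}"
    proof
      assume d: "set p \<inter> Z = {}"
      let ?n = "length p - 1"
      have inA: "p ! i \<in> A - Z" if "i < length p" for i using p d that nth_mem by blast
      have "(p ! 0, p ! ?n) \<in> (Rel A U Z) ^^ ?n"
        unfolding relpow_fun_conv
      proof (intro exI[of _ "\<lambda>i. p ! i"] conjI allI impI)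
        fix i assume "i < ?n"
        then show "(p ! i, p ! Suc i) \<in> Rel A U Z" using inA p unfolding Rel_def by auto
      qed auto
      then have "(hd p, last p) \<in> (Rel A U Z)\<^sup>*"
        using p by (simp add: hd_conv_nth last_conv_nth relpow_imp_rtrancl)
      moreover have "hd p \<in> A - Z" using inA[of 0] p by (simp add: hd_conv_nth)
      ultimately show False using h p by blast
    qed
  qed
qed

lemma sep_mono:
  "separates A U X Y Z \<Longrightarrow> X' \<subseteq> X \<Longrightarrow> Y' \<subseteq> Y \<Longrightarrow> Z \<subseteq> Z' \<Longrightarrow> separates A U X' Y' Z'"
  unfolding separates_def by blast

lemma sep_alpha:
  assumes Us: "\<And>u v. U u v \<Longrightarrow> U v u" and s: "separates A U X Y S"
    and a: "\<alpha> \<in> A" "\<alpha> \<notin> X" "\<alpha> \<notin> Y" "\<alpha> \<notin> S"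
  shows "separates A U Y {\<alpha>} (X \<union> S) \<or> separates A U X {\<alpha>} (Y \<union> S)"
proof (rule ccontr)
  assume "\<not> ?thesis"
  then obtain x y where x: "x \<in> X" "x \<in> A - (Y \<union> S)" "(x, \<alpha>) \<in> (Rel A U (Y \<union> S))\<^sup>*"
    and y: "y \<in> Y" "y \<in> A - (X \<union> S)" "(y, \<alpha>) \<in> (Rel A U (X \<union> S))\<^sup>*"
    unfolding sep_iff by blast
  have "(x, \<alpha>) \<in> (Rel A U S)\<^sup>*" using x(3) rtrancl_mono[OF Rel_mono[of S "Y \<union> S"]] by auto
  moreover have r: "(y, \<alpha>) \<in> (Rel A U S)\<^sup>*" using y(3) rtrancl_mono[OF Rel_mono[of S "X \<union> S"]] by auto
  have "(\<alpha>, y) \<in> (Rel A U S)\<^sup>*" by (rule Rel_sym[where U=U, OF Us r])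
  ultimately have "(x, y) \<in> (Rel A U S)\<^sup>*" by (rule rtrancl_trans)
  then show False using s x y unfolding sep_iff by blast
qed



lemma inter_prop:
  assumes "intersection_property V P M" "X \<subseteq> V" "Y \<subseteq> V" "Z \<subseteq> V" "W \<subseteq> V"
    "X \<inter> Y = {}" "X \<inter> Z = {}" "X \<inter> W = {}" "Y \<inter> Z = {}" "Y \<inter> W = {}" "Z \<inter> W = {}"
    "cond_indep P M X Y (W \<union> Z)" "cond_indep P M X W (Y \<union> Z)"
  shows "cond_indep P M X (Y \<union> W) Z"
  using assms unfolding intersection_property_def by blast

lemma lauritzen:
  assumes P: "prob_space P" "sets P = sets (PiM V M)" and IP: "intersection_property V P M"
    and AV: "A \<subseteq> V" and finA: "finite A"
    and pw: "\<And>v w. v \<in> A \<Longrightarrow> w \<in> A \<Longrightarrow> w \<noteq> v \<Longrightarrow> \<not> U v w \<Longrightarrow> cond_indep P M {v} {w} (A - {v, w})"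
    and Us: "\<And>u v. U u v \<Longrightarrow> U v u"
  shows "X \<subseteq> A \<Longrightarrow> Y \<subseteq> A \<Longrightarrow> S \<subseteq> A \<Longrightarrow> X \<inter> Y = {} \<Longrightarrow> X \<inter> S = {} \<Longrightarrow> Y \<inter> S = {}
    \<Longrightarrow> X \<noteq> {} \<Longrightarrow> Y \<noteq> {} \<Longrightarrow> separates A U X Y S \<Longrightarrow> cond_indep P M X Y S"
proof (induction "card (A - S)" arbitrary: X Y S rule: less_induct)
  case less
  note IH = less.hyps
  have cardlt: "card (A - S') < card (A - S)" if "S \<subset> S'" "S' \<subseteq> A" for S'
    by (rule psubset_card_mono) (use finA that in auto)
  have XV: "X \<subseteq> V" and YV: "Y \<subseteq> V" and SV: "S \<subseteq> V" using less.prems AV by auto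
  show ?case
  proof (cases "X \<union> Y \<union> S = A")
    case True
    show ?thesis
    proof (cases "\<exists>y. Y = {y}")
      case Ysing: True
      then obtain y where y: "Y = {y}" by blast
      show ?thesis
      proof (cases "\<exists>x. X = {x}")
        case True
        then obtain x where x: "X = {x}" by blast
        have S: "S = A - {x, y}" using \<open>X \<union> Y \<union> S = A\<close> less.prems x y by auto
        have xA: "x \<in> A" "y \<in> A" "y \<noteq> x" using less.prems x y by auto
        have "\<not> U x y"
        proof
          assume "U x y"
          then have "(x, y) \<in> Rel A U S" unfolding Rel_def using xA S by auto
          then show False using less.prems(9) xA S x y unfolding sep_iff by auto
        qed
        then show ?thesis using pw[OF xA] x y S by simp
      next
        case False
        obtain x where xX: "x \<in> X" using less.prems by auto
        define X2 where "X2 = X - {x}"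
        have X2ne: "X2 \<noteq> {}" using False xX unfolding X2_def by auto
        have XX: "X = {x} \<union> X2" using xX unfolding X2_def by auto
        have c1: "cond_indep P M {x} Y (S \<union> X2)"
        proof (rule IH)
          show "card (A - (S \<union> X2)) < card (A - S)"
          proof (rule cardlt)
            obtain z where "z \<in> X2" using X2ne by auto
            then show "S \<subset> S \<union> X2" using less.prems(5) unfolding X2_def by blast
          qed (use less.prems in \<open>auto simp: X2_def\<close>)
          show "separates A U {x} Y (S \<union> X2)" by (rule sep_mono[OF less.prems(9)]) (use xX in auto)
        qed (use less.prems xX in \<open>auto simp: X2_def\<close>)
        have c2: "cond_indep P M X2 Y (S \<union> {x})"
        proof (rule IH)
          show "card (A - (S \<union> {x})) < card (A - S)" using cardlt less.prems xX by (metis Un_upper1 Int_iff Un_insert_right empty_iff insert_subset psubsetI insertI1 sup_bot.right_neutral subsetD)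
          show "separates A U X2 Y (S \<union> {x})" by (rule sep_mono[OF less.prems(9)]) (auto simp: X2_def)
        qed (use less.prems xX X2ne in \<open>auto simp: X2_def\<close>)
        have "cond_indep P M Y ({x} \<union> X2) S"
        proof (rule inter_prop[OF IP])
          show "cond_indep P M Y {x} (X2 \<union> S)" using ci_sym[OF c1] by (simp add: Un_commute)
          show "cond_indep P M Y X2 ({x} \<union> S)" using ci_sym[OF c2] by (simp add: Un_commute)
        qed (use less.prems xX XV YV SV in \<open>auto simp: X2_def\<close>)
        then show ?thesis using XX by (simp add: ci_sym)
      qed
    next
      case False
      obtain y where yY: "y \<in> Y" using less.prems by auto
      define Y2 where "Y2 = Y - {y}"
      have Y2ne: "Y2 \<noteq> {}" using False yY unfolding Y2_def by auto
      have YY: "Y = {y} \<union> Y2" using yY unfolding Y2_def by auto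
      have c1: "cond_indep P M X {y} (S \<union> Y2)"
      proof (rule IH)
        show "card (A - (S \<union> Y2)) < card (A - S)"
        proof (rule cardlt)
          obtain z where "z \<in> Y2" using Y2ne by auto
          then show "S \<subset> S \<union> Y2" using less.prems(6) unfolding Y2_def by blast
        qed (use less.prems in \<open>auto simp: Y2_def\<close>)
        show "separates A U X {y} (S \<union> Y2)" by (rule sep_mono[OF less.prems(9)]) (use yY in auto)
      qed (use less.prems yY in \<open>auto simp: Y2_def\<close>)
      have c2: "cond_indep P M X Y2 (S \<union> {y})"
      proof (rule IH)
        show "card (A - (S \<union> {y})) < card (A - S)" using cardlt less.prems yY by (metis Un_upper1 Int_iff Un_insert_right empty_iff insert_subset psubsetI insertI1 sup_bot.right_neutral subsetD)
        show "separates A U X Y2 (S \<union> {y})" by (rule sep_mono[OF less.prems(9)]) (auto simp: Y2_def)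
      qed (use less.prems yY Y2ne in \<open>auto simp: Y2_def\<close>)
      have "cond_indep P M X ({y} \<union> Y2) S"
      proof (rule inter_prop[OF IP])
        show "cond_indep P M X {y} (Y2 \<union> S)" using c1 by (simp add: Un_commute)
        show "cond_indep P M X Y2 ({y} \<union> S)" using c2 by (simp add: Un_commute)
      qed (use less.prems yY XV YV SV in \<open>auto simp: Y2_def\<close>)
      then show ?thesis using YY by simp
    qed
  next
    case False
    then obtain \<alpha> where a: "\<alpha> \<in> A" "\<alpha> \<notin> X" "\<alpha> \<notin> Y" "\<alpha> \<notin> S" using less.prems by auto
    have cardA: "card (A - (S \<union> {\<alpha>})) < card (A - S)" by (rule cardlt) (use a less.prems in auto)
    have cXY: "cond_indep P M X Y (S \<union> {\<alpha>})"
    proof (rule IH[OF cardA])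
      show "separates A U X Y (S \<union> {\<alpha>})" by (rule sep_mono[OF less.prems(9)]) auto
    qed (use less.prems a in auto)
    have aV: "{\<alpha>} \<subseteq> V" using a AV by auto
    from sep_alpha[OF Us less.prems(9) a] show ?thesis
    proof
      assume s: "separates A U Y {\<alpha>} (X \<union> S)"
      have c: "cond_indep P M Y {\<alpha>} (X \<union> S)"
      proof (rule IH)
        show "card (A - (X \<union> S)) < card (A - S)" by (rule cardlt) (use less.prems in auto)
      qed (use less.prems a s in auto)
      have "cond_indep P M Y (X \<union> {\<alpha>}) S"
      proof (rule inter_prop[OF IP])
        show "cond_indep P M Y X ({\<alpha>} \<union> S)" using ci_sym[OF cXY] by (simp add: Un_commute)
        show "cond_indep P M Y {\<alpha>} (X \<union> S)" by (rule c)
      qed (use less.prems a XV YV SV AV in auto)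
      then have "cond_indep P M Y X S" by (rule ci_monoY[OF _ _ _ P(2)]) (use XV aV in auto)
      then show ?thesis by (rule ci_sym)
    next
      assume s: "separates A U X {\<alpha>} (Y \<union> S)"
      have c: "cond_indep P M X {\<alpha>} (Y \<union> S)"
      proof (rule IH)
        show "card (A - (Y \<union> S)) < card (A - S)" by (rule cardlt) (use less.prems in auto)
      qed (use less.prems a s in auto)
      have "cond_indep P M X (Y \<union> {\<alpha>}) S"
      proof (rule inter_prop[OF IP])
        show "cond_indep P M X Y ({\<alpha>} \<union> S)" using cXY by (simp add: Un_commute)
        show "cond_indep P M X {\<alpha>} (Y \<union> S)" by (rule c)
      qed (use less.prems a XV YV SV AV in auto)
      then show "cond_indep P M X Y S" by (rule ci_monoY[OF _ _ _ P(2)]) (use YV aV in auto)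
    qed
  qed
qed



lemma moral_adj_sym:
  assumes "moral_adj V E H v w" shows "moral_adj V E H w v"
proof -
  obtain vs where vs: "v \<noteq> w" "vs \<noteq> []" "set vs \<subseteq> V" "v \<in> {hd vs} \<union> parents E (hd vs)"
    "w \<in> {last vs} \<union> parents E (last vs)" "\<forall>i. Suc i < length vs \<longrightarrow> bidir H (vs ! i) (vs ! Suc i)"
    using assms unfolding moral_adj_def by blast
  have "\<forall>i. Suc i < length (rev vs) \<longrightarrow> bidir H (rev vs ! i) (rev vs ! Suc i)"
  proof (intro allI impI)
    fix i assume i: "Suc i < length (rev vs)"
    define j where "j = length vs - Suc (Suc i)"
    have j: "Suc j < length vs" "length vs - Suc i = Suc j" "length vs - Suc (Suc i) = j" using i unfolding j_def by auto
    have "bidir H (vs ! j) (vs ! Suc j)" using vs(6) j by blast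
    then have "bidir H (vs ! Suc j) (vs ! j)" unfolding bidir_def by (auto simp: insert_commute)
    then show "bidir H (rev vs ! i) (rev vs ! Suc i)" using i j by (simp add: rev_nth)
  qed
  then show ?thesis unfolding moral_adj_def using vs
    by (intro conjI exI[of _ "rev vs"]) (auto simp: hd_rev last_rev)
qed

theorem mainTheorem10:
  fixes V :: "'v set" and E :: "('v \<times> 'v) set" and H :: "'v set set"
    and M :: "'v \<Rightarrow> 'b measure" and P :: "('v \<Rightarrow> 'b) measure"
  assumes "hedg V E H"
    and "\<forall>v\<in>V. standard_borel (M v)"
    and "prob_space P"
    and "sets P = sets (PiM V M)"
    and "intersection_property V P M"
    and "ancestral_pairwise_markov V E H P M"
  shows "ancestral_global_markov V E H P M"
  unfolding ancestral_global_markov_def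
proof (intro allI impI, elim conjE)
  fix A X Y Z
  assume anc: "ancestral V E A" and XA: "X \<subseteq> A" and YA: "Y \<subseteq> A" and ZA: "Z \<subseteq> A"
    and sep: "separates A (moral_adj_induced V E H A) X Y Z"
  let ?U = "moral_adj_induced V E H A"
  have AV: "A \<subseteq> V" using anc unfolding ancestral_def by auto
  have finV: "finite V" using assms(1) unfolding hedg_def by (rule conjunct1)
  have finA: "finite A" using finV AV by (rule finite_subset[rotated])
  have XV: "X \<subseteq> V" "Y \<subseteq> V" "Z \<subseteq> V" using XA YA ZA AV by auto
  have Us: "\<And>u v. ?U u v \<Longrightarrow> ?U v u" unfolding moral_adj_induced_def by (rule moral_adj_sym)
  have pw: "\<And>v w. v \<in> A \<Longrightarrow> w \<in> A \<Longrightarrow> w \<noteq> v \<Longrightarrow> \<not> ?U v w \<Longrightarrow> cond_indep P M {v} {w} (A - {v, w})"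
    using assms(6) anc unfolding ancestral_pairwise_markov_def by blast
  note L = lauritzen[OF assms(3,4,5) AV finA pw Us]
  show "cond_indep P M X Y Z"
  proof (cases "X \<subseteq> Z")
    case True
    then show ?thesis by (rule ci_sub[OF assms(3,4) _ XV(3) XV(2)])
  next
    case nX: False
    show ?thesis
    proof (cases "Y \<subseteq> Z")
      case True
      show ?thesis using ci_sub[OF assms(3,4) True XV(3) XV(1)] by (rule ci_sym)
    next
      case nY: False
      have sep': "separates A ?U (X - Z) (Y - Z) Z" by (rule sep_mono[OF sep]) auto
      have disj: "(X - Z) \<inter> (Y - Z) = {}"
      proof (rule ccontr)
        assume "(X - Z) \<inter> (Y - Z) \<noteq> {}"
        then obtain x where "x \<in> X - Z" "x \<in> Y - Z" by blast
        then show False using sep' XA unfolding sep_iff by blast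
      qed
      have c0: "cond_indep P M (X - Z) (Y - Z) Z"
        by (rule L) (use XA YA ZA nX nY disj sep' in auto)
      have c1: "cond_indep P M ((X - Z) \<union> (X \<inter> Z)) (Y - Z) Z"
        by (rule ci_ext[OF assms(3,4) _ _ XV(3) _ c0]) (use XV in auto)
      have "(X - Z) \<union> (X \<inter> Z) = X" by auto
      with c1 have c2: "cond_indep P M (Y - Z) X Z" using ci_sym by metis
      have c3: "cond_indep P M ((Y - Z) \<union> (Y \<inter> Z)) X Z"
        by (rule ci_ext[OF assms(3,4) _ _ XV(3) _ c2]) (use XV in auto)
      have "(Y - Z) \<union> (Y \<inter> Z) = Y" by auto
      with c3 show ?thesis using ci_sym by metis
    qed
  qed
qed


end
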